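(* Let $\mathcal{G}$ be a GBS graph of groups and $w=a_0^{k_0}y_1a_1^{k_1}\cdots y_na_n^{k_n}$ a $\mathcal{G}$-factorization. If $w$ represents an element of the subgroup $\langle a_0\rangle$ of $F(\mathcal{G})$, then $w=a_0^k$ in $F(\mathcal{G})$ for $$k=\sum_{\nu=0}^n k_\nu\cdot\prod_{\mu=1}^{\nu}\frac{\alpha_\mu}{\beta_\mu},$$ where $\alpha_\mu=\alpha_{y_\mu}$ and $\beta_\mu=\beta_{y_\mu}$ for $1\le\mu\le n$.
   Context: $\mathcal{G}$ consists of a finite connected graph $Y$ (vertices $V(Y)$, edges $E(Y)$, maps $\iota,\tau:E(Y)\to V(Y)$, fixed-point-free involution $y\mapsto\bar y$ with $\iota(\bar y)=\tau(y)$) and integers $\alpha_y,\beta_y\in\mathbb{Z}\setminus\{0\}$ with $\alpha_y=\beta_{\bar y}$. $F(\mathcal{G})$ is the group with generators $V(Y)\cup E(Y)$ and relations $\bar yy=1$, $y\,b^{\beta_y}\bar y=a^{\alpha_y}$ for each $y\in E(Y)$ with $a=\iota(y)$, $b=\tau(y)$. A $\mathcal{G}$-factorization is a word $a_0^{k_0}y_1a_1^{k_1}\cdots y_na_n^{k_n}$ with $y_i\in E(Y)$, $a_i\in V(Y)$, $k_i\in\mathbb{Z}$, $\iota(y_i)=a_{i-1}$, $\tau(y_i)=a_i$ for $1\le i\le n$ and $a_n=a_0$. *)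

theory Defs
  imports Main "HOL.Rat"
begin

definition gbs_graph ::
  "'v set \<Rightarrow> 'e set \<Rightarrow> ('e \<Rightarrow> 'v) \<Rightarrow> ('e \<Rightarrow> 'v) \<Rightarrow> ('e \<Rightarrow> 'e)
   \<Rightarrow> ('e \<Rightarrow> int) \<Rightarrow> ('e \<Rightarrow> int) \<Rightarrow> bool" where
  "gbs_graph V E \<iota> \<tau> bar \<alpha> \<beta> \<longleftrightarrow>
     finite V \<and> V \<noteq> {} \<and> finite E \<and>
     (\<forall>y\<in>E. \<iota> y \<in> V \<and> \<tau> y \<in> V) \<and>
     (\<forall>y\<in>E. bar y \<in> E \<and> bar (bar y) = y \<and> bar y \<noteq> y \<and> \<iota> (bar y) = \<tau> y) \<and>
     (\<forall>u\<in>V. \<forall>v\<in>V. (u, v) \<in> {(\<iota> y, \<tau> y) | y. y \<in> E}\<^sup>*) \<and>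
     (\<forall>y\<in>E. \<alpha> y \<noteq> 0 \<and> \<beta> y \<noteq> 0 \<and> \<alpha> y = \<beta> (bar y))"

text \<open>Words in the generators V \<union> E (vertices Inl, edges Inr); a letter is a
  generator together with a flag, True meaning the inverse of the generator.\<close>

type_synonym ('v, 'e) gword = "(('v + 'e) \<times> bool) list"

definition gpow :: "'g \<Rightarrow> int \<Rightarrow> ('g \<times> bool) list" where
  "gpow g k = (if 0 \<le> k then replicate (nat k) (g, False) else replicate (nat (- k)) (g, True))"

definition gbs_relators ::
  "'e set \<Rightarrow> ('e \<Rightarrow> 'v) \<Rightarrow> ('e \<Rightarrow> 'v) \<Rightarrow> ('e \<Rightarrow> 'e)
   \<Rightarrow> ('e \<Rightarrow> int) \<Rightarrow> ('e \<Rightarrow> int) \<Rightarrow> ('v, 'e) gword set" where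
  "gbs_relators E \<iota> \<tau> bar \<alpha> \<beta> =
     {[(Inr (bar y), False), (Inr y, False)] | y. y \<in> E} \<union>
     {[(Inr y, False)] @ gpow (Inl (\<tau> y)) (\<beta> y) @ [(Inr (bar y), False)]
        @ gpow (Inl (\<iota> y)) (- \<alpha> y) | y. y \<in> E}"

inductive pres_eq :: "('g \<times> bool) list set \<Rightarrow> ('g \<times> bool) list \<Rightarrow> ('g \<times> bool) list \<Rightarrow> bool"
  for R where
  refl: "pres_eq R u u"
| sym: "pres_eq R u v \<Longrightarrow> pres_eq R v u"
| trans: "pres_eq R u v \<Longrightarrow> pres_eq R v w \<Longrightarrow> pres_eq R u w"
| ctxt: "pres_eq R u v \<Longrightarrow> pres_eq R (x @ u @ z) (x @ v @ z)"
| cancel: "pres_eq R [(g, b), (g, \<not> b)] []"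
| rel: "r \<in> R \<Longrightarrow> pres_eq R r []"

definition F_eq ::
  "'e set \<Rightarrow> ('e \<Rightarrow> 'v) \<Rightarrow> ('e \<Rightarrow> 'v) \<Rightarrow> ('e \<Rightarrow> 'e)
   \<Rightarrow> ('e \<Rightarrow> int) \<Rightarrow> ('e \<Rightarrow> int) \<Rightarrow> ('v, 'e) gword \<Rightarrow> ('v, 'e) gword \<Rightarrow> bool" where
  "F_eq E \<iota> \<tau> bar \<alpha> \<beta> = pres_eq (gbs_relators E \<iota> \<tau> bar \<alpha> \<beta>)"

text \<open>A G-factorization a_0^{k_0} y_1 a_1^{k_1} ... y_n a_n^{k_n}, given by
  n, a :: nat => vertex (indices 0..n), y :: nat => edge (indices 1..n),
  k :: nat => int (indices 0..n).\<close>

definition is_factorization ::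
  "'v set \<Rightarrow> 'e set \<Rightarrow> ('e \<Rightarrow> 'v) \<Rightarrow> ('e \<Rightarrow> 'v) \<Rightarrow> nat \<Rightarrow> (nat \<Rightarrow> 'v) \<Rightarrow> (nat \<Rightarrow> 'e) \<Rightarrow> bool" where
  "is_factorization V E \<iota> \<tau> n a y \<longleftrightarrow>
     (\<forall>i\<le>n. a i \<in> V) \<and>
     (\<forall>i\<in>{1..n}. y i \<in> E \<and> \<iota> (y i) = a (i - 1) \<and> \<tau> (y i) = a i) \<and>
     a n = a 0"

definition fact_word :: "nat \<Rightarrow> (nat \<Rightarrow> 'v) \<Rightarrow> (nat \<Rightarrow> 'e) \<Rightarrow> (nat \<Rightarrow> int) \<Rightarrow> ('v, 'e) gword" where
  "fact_word n a y k =
     gpow (Inl (a 0)) (k 0) @ concat (map (\<lambda>i. (Inr (y i), False) # gpow (Inl (a i)) (k i)) [1..<Suc n])"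

end

theory Submission
  imports Defs
begin

definition rr :: "('e \<Rightarrow> int) \<Rightarrow> ('e \<Rightarrow> int) \<Rightarrow> 'e \<Rightarrow> rat" where
  "rr \<alpha> \<beta> e = (if \<alpha> e = 0 \<or> \<beta> e = 0 then 1 else of_int (\<alpha> e) / of_int (\<beta> e))"

definition cmp :: "rat \<times> rat \<Rightarrow> rat \<times> rat \<Rightarrow> rat \<times> rat" where
  "cmp p q = (fst p * fst q, fst p * snd q + snd p)"

fun lval :: "('e \<Rightarrow> int) \<Rightarrow> ('e \<Rightarrow> int) \<Rightarrow> ('v + 'e) \<times> bool \<Rightarrow> rat \<times> rat" where
  "lval \<alpha> \<beta> (Inl v, False) = (1, 1)"
| "lval \<alpha> \<beta> (Inl v, True) = (1, -1)"
| "lval \<alpha> \<beta> (Inr e, False) = (rr \<alpha> \<beta> e, 0)"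
| "lval \<alpha> \<beta> (Inr e, True) = (1 / rr \<alpha> \<beta> e, 0)"

fun ev :: "('e \<Rightarrow> int) \<Rightarrow> ('e \<Rightarrow> int) \<Rightarrow> ('v, 'e) gword \<Rightarrow> rat \<times> rat" where
  "ev \<alpha> \<beta> [] = (1, 0)"
| "ev \<alpha> \<beta> (x # xs) = cmp (lval \<alpha> \<beta> x) (ev \<alpha> \<beta> xs)"

lemma rr_nz: "rr \<alpha> \<beta> e \<noteq> 0"
  by (simp add: rr_def)

lemma ev_append: "ev \<alpha> \<beta> (u @ v) = cmp (ev \<alpha> \<beta> u) (ev \<alpha> \<beta> v)"
  by (induction u) (auto simp: cmp_def algebra_simps)

lemma ev_rep_F: "ev \<alpha> \<beta> (replicate m (Inl v, False)) = (1, of_nat m)"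
  by (induction m) (auto simp: cmp_def)

lemma ev_rep_T: "ev \<alpha> \<beta> (replicate m (Inl v, True)) = (1, - of_nat m)"
  by (induction m) (auto simp: cmp_def)

lemma ev_gpow: "ev \<alpha> \<beta> (gpow (Inl v) k) = (1, of_int k)"
  by (auto simp: gpow_def ev_rep_F ev_rep_T)

lemma ev_inv:
  assumes "pres_eq (gbs_relators E \<iota> \<tau> bar \<alpha> \<beta>) u w"
    and "\<forall>y\<in>E. bar y \<in> E \<and> bar (bar y) = y"
    and "\<forall>y\<in>E. \<alpha> y \<noteq> 0 \<and> \<beta> y \<noteq> 0 \<and> \<alpha> y = \<beta> (bar y)"
  shows "ev \<alpha> \<beta> u = ev \<alpha> \<beta> w"
  using assms(1)
proof (induction rule: pres_eq.induct)
  case (ctxt u v x z)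
  then show ?case by (simp add: ev_append)
next
  case (cancel g b)
  then show ?case
    by (cases g; cases b) (auto simp: cmp_def rr_nz)
next
  case (rel r)
  then obtain y where y: "y \<in> E" and r: "r = [(Inr (bar y), False), (Inr y, False)] \<or>
     r = [(Inr y, False)] @ gpow (Inl (\<tau> y)) (\<beta> y) @ [(Inr (bar y), False)]
        @ gpow (Inl (\<iota> y)) (- \<alpha> y)"
    unfolding gbs_relators_def by blast
  have b: "bar y \<in> E" "bar (bar y) = y" using y assms(2) by auto
  have nz: "\<alpha> y \<noteq> 0" "\<beta> y \<noteq> 0" "\<alpha> y = \<beta> (bar y)" "\<alpha> (bar y) = \<beta> y"
    using y b assms(3) by force+
  have rb: "rr \<alpha> \<beta> (bar y) = of_int (\<beta> y) / of_int (\<alpha> y)"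
    using nz by (simp add: rr_def)
  have ry: "rr \<alpha> \<beta> y = of_int (\<alpha> y) / of_int (\<beta> y)"
    using nz by (simp add: rr_def)
  from r show ?case
  proof
    assume "r = [(Inr (bar y), False), (Inr y, False)]"
    then show ?thesis using nz by (simp add: cmp_def rb ry)
  next
    assume "r = [(Inr y, False)] @ gpow (Inl (\<tau> y)) (\<beta> y) @ [(Inr (bar y), False)]
        @ gpow (Inl (\<iota> y)) (- \<alpha> y)"
    then show ?thesis using nz by (simp add: ev_append ev_gpow cmp_def rb ry)
  qed
qed auto

lemma ev_fact:
  "ev \<alpha> \<beta> (fact_word n a y k) =
    ((\<Prod>\<mu>=1..n. rr \<alpha> \<beta> (y \<mu>)),
     (\<Sum>\<nu>=0..n. of_int (k \<nu>) * (\<Prod>\<mu>=1..\<nu>. rr \<alpha> \<beta> (y \<mu>))))"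
proof (induction n)
  case 0
  then show ?case by (simp add: fact_word_def ev_gpow)
next
  case (Suc n)
  have "fact_word (Suc n) a y k = fact_word n a y k @ ((Inr (y (Suc n)), False) # gpow (Inl (a (Suc n))) (k (Suc n)))"
    by (simp add: fact_word_def)
  then show ?case using Suc
    by (simp add: ev_append ev_gpow cmp_def algebra_simps)
qed

theorem lemma3p1:
  fixes V :: "'v set" and E :: "'e set"
    and \<iota> \<tau> :: "'e \<Rightarrow> 'v" and bar :: "'e \<Rightarrow> 'e" and \<alpha> \<beta> :: "'e \<Rightarrow> int"
    and n :: nat and a :: "nat \<Rightarrow> 'v" and y :: "nat \<Rightarrow> 'e" and k :: "nat \<Rightarrow> int"
  assumes "gbs_graph V E \<iota> \<tau> bar \<alpha> \<beta>"
    and "is_factorization V E \<iota> \<tau> n a y"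
    and "\<exists>m::int. F_eq E \<iota> \<tau> bar \<alpha> \<beta> (fact_word n a y k) (gpow (Inl (a 0)) m)"
  shows "\<exists>K::int. of_int K = (\<Sum>\<nu>=0..n. of_int (k \<nu>) *
              (\<Prod>\<mu>=1..\<nu>. of_int (\<alpha> (y \<mu>)) / of_int (\<beta> (y \<mu>))) :: rat)
           \<and> F_eq E \<iota> \<tau> bar \<alpha> \<beta> (fact_word n a y k) (gpow (Inl (a 0)) K)"
proof -
  obtain m where m: "F_eq E \<iota> \<tau> bar \<alpha> \<beta> (fact_word n a y k) (gpow (Inl (a 0)) m)"
    using assms(3) by blast
  have g1: "\<forall>y\<in>E. bar y \<in> E \<and> bar (bar y) = y"
    and g2: "\<forall>y\<in>E. \<alpha> y \<noteq> 0 \<and> \<beta> y \<noteq> 0 \<and> \<alpha> y = \<beta> (bar y)"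
    using assms(1) unfolding gbs_graph_def by auto
  have "ev \<alpha> \<beta> (fact_word n a y k) = ev \<alpha> \<beta> (gpow (Inl (a 0)) m)"
    using ev_inv[OF m[unfolded F_eq_def] g1 g2] .
  hence e: "(\<Sum>\<nu>=0..n. of_int (k \<nu>) * (\<Prod>\<mu>=1..\<nu>. rr \<alpha> \<beta> (y \<mu>))) = of_int m"
    by (simp add: ev_fact ev_gpow)
  have yE: "\<And>\<mu>. \<mu> \<in> {1..n} \<Longrightarrow> y \<mu> \<in> E" using assms(2) unfolding is_factorization_def by auto
  have "(\<Sum>\<nu>=0..n. of_int (k \<nu>) * (\<Prod>\<mu>=1..\<nu>. rr \<alpha> \<beta> (y \<mu>))) =
        (\<Sum>\<nu>=0..n. of_int (k \<nu>) * (\<Prod>\<mu>=1..\<nu>. of_int (\<alpha> (y \<mu>)) / of_int (\<beta> (y \<mu>))) :: rat)"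
  proof (rule sum.cong[OF HOL.refl])
    fix \<nu> assume "\<nu> \<in> {0..n}"
    hence "\<And>\<mu>. \<mu> \<in> {1..\<nu>} \<Longrightarrow> rr \<alpha> \<beta> (y \<mu>) = of_int (\<alpha> (y \<mu>)) / of_int (\<beta> (y \<mu>))"
    proof -
      fix \<mu> assume "\<mu> \<in> {1..\<nu>}"
      hence "y \<mu> \<in> E" using yE \<open>\<nu> \<in> {0..n}\<close> by auto
      hence "\<alpha> (y \<mu>) \<noteq> 0" "\<beta> (y \<mu>) \<noteq> 0" using g2 by auto
      thus "rr \<alpha> \<beta> (y \<mu>) = of_int (\<alpha> (y \<mu>)) / of_int (\<beta> (y \<mu>))" by (simp add: rr_def)
    qed
    thus "of_int (k \<nu>) * (\<Prod>\<mu>=1..\<nu>. rr \<alpha> \<beta> (y \<mu>)) =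
          of_int (k \<nu>) * (\<Prod>\<mu>=1..\<nu>. of_int (\<alpha> (y \<mu>)) / of_int (\<beta> (y \<mu>)))"
      by (metis (no_types, lifting) prod.cong)
  qed
  with e m show ?thesis by (intro exI[of _ m]) auto
qed

end
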